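(* Let $\pi:D\to M$ be a homomorphism from a discrete semigroup $D$ to a Hausdorff topological semigroup $M$, and let $S=D\cup_\pi M$ (a semitopological semigroup). The following are equivalent: (1) $S$ is a topological semigroup (multiplication jointly continuous); (2) for each $c\in D$ the set $D_c=\{(x,y)\in D\times D:xy=c\}$ is closed in $S\times S$. If moreover $\pi$ is finitely resolvable, then (1) and (2) are equivalent to (3) for each $c\in D$ the set $\pi^2(D_c)=\{(\pi(x),\pi(y)):(x,y)\in D_c\}$ is closed and discrete in $M\times M$, and they are implied by (4) the subspace $\pi(D)$ is discrete in $M$ and $M\setminus\pi(D)$ is a two-sided ideal in $M$.
   Context: For a discrete space $D$: if $D$ is infinite, $\alpha D=D\cup\{\infty\}$ is its one-point compactification; if $D$ is finite, $\alpha D$ is the topological sum of $D$ and an isolated point $\infty\notin D$. For a map $\pi:D\to M$, $D\cup_\pi M$ is the subspace $\{(x,\pi(x)):x\in D\}\cup(\{\infty\}\times M)$ of $\alpha D\times M$, with $D$ identified with $\{(x,\pi(x))\}$ and $M$ with $\{\infty\}\times M$. When $D$ is a semigroup, $M$ a semitopological semigroup and $\pi$ a homomorphism, $D\cup_\pi M$ carries the semigroup operation extending those of $D$ and $M$ by $xy=\pi(x)y$ for $x\in D,y\in M$ and $xy=x\pi(y)$ for $x\in M,y\in D$; this makes it a semitopological semigroup (separately continuous multiplication). The homomorphism $\pi$ is finitely resolvable if for all $a,b\in M$ and $c\in D$ the set $\{(x,y)\in D\times D:\pi(x)=a,\ \pi(y)=b,\ xy=c\}$ is finite. *)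

theory Defs
  imports "HOL-Analysis.Analysis"
begin

text \<open>The space \<alpha>D on type d option, with None playing the role of the point at infinity.  For infinite D this is the
  one-point compactification of the discrete space D; for finite D every set is open, i.e. \<alpha>D is
  the discrete sum of D and an isolated point.\<close>
definition alpha_top :: "'d option topology" where
  "alpha_top = topology (\<lambda>U. None \<in> U \<longrightarrow> finite (- U))"

text \<open>Underlying set of D \<union>_\<pi> M as a subset of \<alpha>D \<times> M.\<close>
definition glue_carrier :: "('d \<Rightarrow> 'm) \<Rightarrow> ('d option \<times> 'm) set" where
  "glue_carrier \<pi> = {(Some x, \<pi> x) | x. True} \<union> {(None, m) | m. True}"

definition glue_top :: "('d \<Rightarrow> 'm::topological_space) \<Rightarrow> ('d option \<times> 'm) topology" where
  "glue_top \<pi> = subtopology (prod_topology alpha_top euclidean) (glue_carrier \<pi>)"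

text \<open>Multiplication of D \<union>_\<pi> M (on carrier points: xy in D, \<pi>(x)y, x\<pi>(y), or in M).\<close>
definition glue_mult ::
  "('d::semigroup_mult) option \<times> ('m::semigroup_mult) \<Rightarrow> 'd option \<times> 'm \<Rightarrow> 'd option \<times> 'm" where
  "glue_mult s t = ((case (fst s, fst t) of (Some x, Some y) \<Rightarrow> Some (x * y) | _ \<Rightarrow> None),
                    snd s * snd t)"

definition finitely_resolvable :: "('d::semigroup_mult \<Rightarrow> 'm) \<Rightarrow> bool" where
  "finitely_resolvable \<pi> \<longleftrightarrow>
     (\<forall>a b c. finite {(x, y). \<pi> x = a \<and> \<pi> y = b \<and> x * y = c})"

definition two_sided_ideal :: "'m::semigroup_mult set \<Rightarrow> bool" where
  "two_sided_ideal I \<longleftrightarrow> (\<forall>a\<in>I. \<forall>m. m * a \<in> I \<and> a * m \<in> I)"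

end

theory Submission
  imports Defs
begin

lemma alpha_istop: "istopology (\<lambda>U::'d option set. None \<in> U \<longrightarrow> finite (- U))"
  unfolding istopology_def
proof (intro conjI allI impI)
  fix K :: "'d option set set" assume h: "\<forall>K\<in>K. None \<in> K \<longrightarrow> finite (- K)" "None \<in> \<Union>K"
  then obtain k where "k \<in> K" "None \<in> k" by auto
  with h have "finite (-k)" by auto
  moreover have "- \<Union>K \<subseteq> -k" using \<open>k\<in>K\<close> by auto
  ultimately show "finite (- \<Union>K)" using finite_subset by blast
qed auto

lemma alpha_open0: "openin alpha_top = (\<lambda>U. None \<in> U \<longrightarrow> finite (- U))"
  unfolding alpha_top_def by (rule topology_inverse'[OF alpha_istop])

lemma alpha_open: "openin alpha_top U \<longleftrightarrow> (None \<in> U \<longrightarrow> finite (- U))"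
  by (simp add: alpha_open0)

lemma alpha_topspace: "topspace alpha_top = UNIV"
proof -
  have "openin alpha_top UNIV" by (simp add: alpha_open)
  then show ?thesis using openin_subset by blast
qed

lemma glue_topspace: "topspace (glue_top \<pi>) = glue_carrier \<pi>"
  by (simp add: glue_top_def alpha_topspace)

lemma glue_open_single: "openin (glue_top \<pi>) {(Some x, \<pi> x)}"
proof -
  have "openin (prod_topology alpha_top euclidean) ({Some x} \<times> UNIV)"
    by (simp add: openin_prod_Times_iff alpha_open)
  moreover have "{(Some x, \<pi> x)} = ({Some x} \<times> UNIV) \<inter> glue_carrier \<pi>"
    by (auto simp: glue_carrier_def)
  ultimately show ?thesis unfolding glue_top_def openin_subtopology by blast
qed

lemma glue_open_nb:
  assumes "finite F" "open W"
  shows "openin (glue_top \<pi>) (glue_carrier \<pi> \<inter> ((- (Some ` F)) \<times> W))"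
proof -
  have "openin (prod_topology alpha_top euclidean) ((- (Some ` F)) \<times> W)"
    using assms by (auto simp: openin_prod_Times_iff alpha_open)
  then show ?thesis unfolding glue_top_def openin_subtopology by blast
qed

lemma glue_nb_elim:
  assumes "openin (glue_top \<pi>) U" "(None, m) \<in> U"
  shows "\<exists>F W. finite F \<and> open W \<and> m \<in> W \<and> glue_carrier \<pi> \<inter> ((- (Some ` F)) \<times> W) \<subseteq> U"
proof -
  obtain T where T: "openin (prod_topology alpha_top euclidean) T" "U = T \<inter> glue_carrier \<pi>"
    using assms unfolding glue_top_def openin_subtopology by blast
  have "(None, m) \<in> T" using T(2) assms(2) by simp
  then obtain V W where VW: "openin alpha_top V" "openin euclidean W" "None \<in> V" "m \<in> W" "V \<times> W \<subseteq> T"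
    using T(1) unfolding openin_prod_topology_alt by meson
  define F where "F = Some -` (- V)"
  have "finite (-V)" using VW(1,3) by (simp add: alpha_open)
  hence "finite F" unfolding F_def by (intro finite_vimageI) auto
  moreover have "- (Some ` F) \<subseteq> V"
  proof (intro subsetI)
    fix z assume "z \<in> - Some ` F"
    then show "z \<in> V" using VW(3) by (cases z) (auto simp: F_def)
  qed
  moreover have "glue_carrier \<pi> \<inter> ((- (Some ` F)) \<times> W) \<subseteq> U"
    using calculation(2) VW(5) T(2) by blast
  ultimately show ?thesis using VW(2,4) by (intro exI[of _ F] exI[of _ W]) simp
qed

lemma closedin_prod_sep:
  assumes "Z \<subseteq> topspace X \<times> topspace Y"
  shows "closedin (prod_topology X Y) Z \<longleftrightarrow>
    (\<forall>x\<in>topspace X. \<forall>y\<in>topspace Y. (x,y) \<notin> Z \<longrightarrow>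
       (\<exists>U V. openin X U \<and> openin Y V \<and> x \<in> U \<and> y \<in> V \<and> (U \<times> V) \<inter> Z = {}))"
proof
  assume "closedin (prod_topology X Y) Z"
  then have o: "openin (prod_topology X Y) (topspace X \<times> topspace Y - Z)"
    by (simp add: closedin_def)
  show "\<forall>x\<in>topspace X. \<forall>y\<in>topspace Y. (x,y) \<notin> Z \<longrightarrow>
       (\<exists>U V. openin X U \<and> openin Y V \<and> x \<in> U \<and> y \<in> V \<and> (U \<times> V) \<inter> Z = {})"
  proof (intro ballI impI)
    fix x y assume "x \<in> topspace X" "y \<in> topspace Y" "(x,y) \<notin> Z"
    then have "(x, y) \<in> topspace X \<times> topspace Y - Z" by simp
    then obtain U V where "openin X U" "openin Y V" "x \<in> U" "y \<in> V" "U \<times> V \<subseteq> topspace X \<times> topspace Y - Z"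
      using o unfolding openin_prod_topology_alt by meson
    then show "\<exists>U V. openin X U \<and> openin Y V \<and> x \<in> U \<and> y \<in> V \<and> (U \<times> V) \<inter> Z = {}"
      by (intro exI[of _ U] exI[of _ V]) auto
  qed
next
  assume R: "\<forall>x\<in>topspace X. \<forall>y\<in>topspace Y. (x,y) \<notin> Z \<longrightarrow>
       (\<exists>U V. openin X U \<and> openin Y V \<and> x \<in> U \<and> y \<in> V \<and> (U \<times> V) \<inter> Z = {})"
  have "openin (prod_topology X Y) (topspace X \<times> topspace Y - Z)"
    unfolding openin_prod_topology_alt
  proof (intro allI impI)
    fix x y assume "(x, y) \<in> topspace X \<times> topspace Y - Z"
    then have "x \<in> topspace X" "y \<in> topspace Y" "(x,y) \<notin> Z" by auto
    then obtain U V where UV: "openin X U" "openin Y V" "x \<in> U" "y \<in> V" "(U \<times> V) \<inter> Z = {}"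
      using R by meson
    moreover have "U \<subseteq> topspace X" "V \<subseteq> topspace Y" using UV(1,2) openin_subset by auto
    ultimately show "\<exists>U V. openin X U \<and> openin Y V \<and> x \<in> U \<and> y \<in> V \<and> U \<times> V \<subseteq> topspace X \<times> topspace Y - Z"
      by (intro exI[of _ U] exI[of _ V]) auto
  qed
  then show "closedin (prod_topology X Y) Z" using assms by (simp add: closedin_def)
qed

lemma discrete_iff:
  "subtopology euclidean P = discrete_topology P \<longleftrightarrow> (\<forall>p\<in>P. \<exists>U. open U \<and> U \<inter> P = {p})"
proof
  assume eq: "subtopology euclidean P = discrete_topology P"
  show "\<forall>p\<in>P. \<exists>U. open U \<and> U \<inter> P = {p}"
  proof
    fix p assume "p \<in> P"
    then have "openin (discrete_topology P) {p}" by simp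
    then have "openin (subtopology euclidean P) {p}" using eq by simp
    then obtain T where "open T" "{p} = T \<inter> P" unfolding openin_subtopology by auto
    then show "\<exists>U. open U \<and> U \<inter> P = {p}" by auto
  qed
next
  assume R: "\<forall>p\<in>P. \<exists>U. open U \<and> U \<inter> P = {p}"
  have "\<forall>x\<in>P. openin (subtopology euclidean P) {x}"
  proof
    fix x assume "x \<in> P"
    then obtain U where "open U" "U \<inter> P = {x}" using R by blast
    then show "openin (subtopology euclidean P) {x}" unfolding openin_subtopology by auto
  qed
  then have "discrete_topology P = subtopology euclidean P"
    by (subst discrete_topology_unique) simp
  then show "subtopology euclidean P = discrete_topology P" by simp
qed

definition Dset :: "('d::semigroup_mult \<Rightarrow> 'm) \<Rightarrow> 'd \<Rightarrow> (('d option \<times> 'm) \<times> ('d option \<times> 'm)) set" where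
  "Dset \<pi> c = {((Some x, \<pi> x), (Some y, \<pi> y)) | x y. x * y = c}"

definition sep1 :: "('d::semigroup_mult \<Rightarrow> 'm::topological_space) \<Rightarrow> 'd \<Rightarrow> bool" where
  "sep1 \<pi> c \<longleftrightarrow> (\<forall>x b. \<exists>F W. finite F \<and> open W \<and> b \<in> W \<and> (\<forall>y. x * y = c \<longrightarrow> y \<notin> F \<longrightarrow> \<pi> y \<notin> W))"
definition sep2 :: "('d::semigroup_mult \<Rightarrow> 'm::topological_space) \<Rightarrow> 'd \<Rightarrow> bool" where
  "sep2 \<pi> c \<longleftrightarrow> (\<forall>a y. \<exists>F W. finite F \<and> open W \<and> a \<in> W \<and> (\<forall>x. x * y = c \<longrightarrow> x \<notin> F \<longrightarrow> \<pi> x \<notin> W))"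
definition sep3 :: "('d::semigroup_mult \<Rightarrow> 'm::topological_space) \<Rightarrow> 'd \<Rightarrow> bool" where
  "sep3 \<pi> c \<longleftrightarrow> (\<forall>a b. \<exists>F1 W1 F2 W2. finite F1 \<and> finite F2 \<and> open W1 \<and> open W2 \<and> a \<in> W1 \<and> b \<in> W2 \<and>
      (\<forall>x y. x * y = c \<longrightarrow> x \<notin> F1 \<longrightarrow> y \<notin> F2 \<longrightarrow> \<pi> x \<in> W1 \<longrightarrow> \<pi> y \<notin> W2))"
definition claim :: "('d::semigroup_mult \<Rightarrow> 'm::topological_space) \<Rightarrow> 'd \<Rightarrow> bool" where
  "claim \<pi> c \<longleftrightarrow> (\<forall>a b. \<exists>W1 W2. open W1 \<and> open W2 \<and> a \<in> W1 \<and> b \<in> W2 \<and>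
      (\<forall>x y. x * y = c \<longrightarrow> \<pi> x \<in> W1 \<longrightarrow> \<pi> y \<in> W2 \<longrightarrow> \<pi> x = a \<and> \<pi> y = b))"

lemma glue_carrier_cases:
  assumes "s \<in> glue_carrier \<pi>"
  obtains x where "s = (Some x, \<pi> x)" | a where "s = (None, a)"
  using assms unfolding glue_carrier_def by auto

lemma Dset_sub: "Dset \<pi> c \<subseteq> topspace (glue_top \<pi>) \<times> topspace (glue_top \<pi>)"
  by (auto simp: Dset_def glue_topspace glue_carrier_def)

lemma closed_iff_sep:
  "closedin (prod_topology (glue_top \<pi>) (glue_top \<pi>)) (Dset \<pi> c) \<longleftrightarrow> sep1 \<pi> c \<and> sep2 \<pi> c \<and> sep3 \<pi> c"
  (is "?L \<longleftrightarrow> ?R")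
proof
  let ?C = "glue_carrier \<pi>"
  assume ?L
  then have H: "\<And>s t. s \<in> ?C \<Longrightarrow> t \<in> ?C \<Longrightarrow> (s,t) \<notin> Dset \<pi> c \<Longrightarrow>
     \<exists>U V. openin (glue_top \<pi>) U \<and> openin (glue_top \<pi>) V \<and> s \<in> U \<and> t \<in> V \<and> (U \<times> V) \<inter> Dset \<pi> c = {}"
    using \<open>?L\<close> unfolding closedin_prod_sep[OF Dset_sub[of \<pi> c]] glue_topspace by blast
  have inC1: "(Some x, \<pi> x) \<in> ?C" for x by (auto simp: glue_carrier_def)
  have inC2: "(None, a) \<in> ?C" for a by (auto simp: glue_carrier_def)
  have nD: "\<And>s t. fst s = None \<or> fst t = None \<Longrightarrow> (s,t) \<notin> Dset \<pi> c" by (auto simp: Dset_def)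
  have s1: "sep1 \<pi> c" unfolding sep1_def
  proof (intro allI)
    fix x b
    obtain U V where UV: "openin (glue_top \<pi>) V" "(Some x, \<pi> x) \<in> U" "(None, b) \<in> V" "(U \<times> V) \<inter> Dset \<pi> c = {}"
      using H[OF inC1[of x] inC2[of b] nD[of "(Some x, \<pi> x)" "(None, b)"]] by auto
    obtain F W where FW: "finite F" "open W" "b \<in> W" "?C \<inter> ((- (Some ` F)) \<times> W) \<subseteq> V"
      using glue_nb_elim[OF UV(1,3)] by blast
    have "\<pi> y \<notin> W" if "x * y = c" "y \<notin> F" for y
    proof
      assume "\<pi> y \<in> W"
      then have "(Some y, \<pi> y) \<in> V" using FW(4) that inC1 by auto
      then have "((Some x, \<pi> x), (Some y, \<pi> y)) \<in> (U \<times> V) \<inter> Dset \<pi> c"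
        using UV(2) that by (auto simp: Dset_def)
      then show False using UV(4) by blast
    qed
    then show "\<exists>F W. finite F \<and> open W \<and> b \<in> W \<and> (\<forall>y. x * y = c \<longrightarrow> y \<notin> F \<longrightarrow> \<pi> y \<notin> W)"
      using FW by blast
  qed
  have s2: "sep2 \<pi> c" unfolding sep2_def
  proof (intro allI)
    fix a y
    obtain U V where UV: "openin (glue_top \<pi>) U" "(None, a) \<in> U" "(Some y, \<pi> y) \<in> V" "(U \<times> V) \<inter> Dset \<pi> c = {}"
      using H[OF inC2[of a] inC1[of y] nD[of "(None, a)" "(Some y, \<pi> y)"]] by auto
    obtain F W where FW: "finite F" "open W" "a \<in> W" "?C \<inter> ((- (Some ` F)) \<times> W) \<subseteq> U"
      using glue_nb_elim[OF UV(1,2)] by blast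
    have "\<pi> x \<notin> W" if "x * y = c" "x \<notin> F" for x
    proof
      assume "\<pi> x \<in> W"
      then have "(Some x, \<pi> x) \<in> U" using FW(4) that inC1 by auto
      then have "((Some x, \<pi> x), (Some y, \<pi> y)) \<in> (U \<times> V) \<inter> Dset \<pi> c"
        using UV(3) that by (auto simp: Dset_def)
      then show False using UV(4) by blast
    qed
    then show "\<exists>F W. finite F \<and> open W \<and> a \<in> W \<and> (\<forall>x. x * y = c \<longrightarrow> x \<notin> F \<longrightarrow> \<pi> x \<notin> W)"
      using FW by blast
  qed
  have s3: "sep3 \<pi> c" unfolding sep3_def
  proof (intro allI)
    fix a b
    obtain U V where UV: "openin (glue_top \<pi>) U" "openin (glue_top \<pi>) V" "(None, a) \<in> U" "(None, b) \<in> V" "(U \<times> V) \<inter> Dset \<pi> c = {}"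
      using H[OF inC2[of a] inC2[of b] nD[of "(None, a)" "(None, b)"]] by auto
    obtain F1 W1 where FW1: "finite F1" "open W1" "a \<in> W1" "?C \<inter> ((- (Some ` F1)) \<times> W1) \<subseteq> U"
      using glue_nb_elim[OF UV(1,3)] by blast
    obtain F2 W2 where FW2: "finite F2" "open W2" "b \<in> W2" "?C \<inter> ((- (Some ` F2)) \<times> W2) \<subseteq> V"
      using glue_nb_elim[OF UV(2,4)] by blast
    have "\<pi> y \<notin> W2" if "x * y = c" "x \<notin> F1" "y \<notin> F2" "\<pi> x \<in> W1" for x y
    proof
      assume "\<pi> y \<in> W2"
      then have "(Some x, \<pi> x) \<in> U" "(Some y, \<pi> y) \<in> V" using FW1(4) FW2(4) that inC1 by auto
      then have "((Some x, \<pi> x), (Some y, \<pi> y)) \<in> (U \<times> V) \<inter> Dset \<pi> c"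
        using that by (auto simp: Dset_def)
      then show False using UV(5) by blast
    qed
    then show "\<exists>F1 W1 F2 W2. finite F1 \<and> finite F2 \<and> open W1 \<and> open W2 \<and> a \<in> W1 \<and> b \<in> W2 \<and>
      (\<forall>x y. x * y = c \<longrightarrow> x \<notin> F1 \<longrightarrow> y \<notin> F2 \<longrightarrow> \<pi> x \<in> W1 \<longrightarrow> \<pi> y \<notin> W2)"
      using FW1 FW2 by blast
  qed
  show ?R using s1 s2 s3 by blast
next
  let ?C = "glue_carrier \<pi>"
  assume R: ?R
  show ?L
    unfolding closedin_prod_sep[OF Dset_sub] glue_topspace
  proof (intro ballI impI)
    fix s t assume st: "s \<in> ?C" "t \<in> ?C" "(s, t) \<notin> Dset \<pi> c"
    show "\<exists>U V. openin (glue_top \<pi>) U \<and> openin (glue_top \<pi>) V \<and> s \<in> U \<and> t \<in> V \<and> U \<times> V \<inter> Dset \<pi> c = {}"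
    proof (cases rule: glue_carrier_cases[OF st(1)])
      case (1 x)
      note sx = this
      show ?thesis
      proof (cases rule: glue_carrier_cases[OF st(2)])
        case (1 y)
        then show ?thesis using sx st(3)
          by (intro exI[of _ "{s}"] exI[of _ "{t}"]) (auto simp: glue_open_single)
      next
        case (2 b)
        obtain F W where FW: "finite F" "open W" "b \<in> W" "\<forall>y. x * y = c \<longrightarrow> y \<notin> F \<longrightarrow> \<pi> y \<notin> W"
          using R unfolding sep1_def by blast
        let ?V = "?C \<inter> ((- (Some ` F)) \<times> W)"
        have disj: "{s} \<times> ?V \<inter> Dset \<pi> c = {}"
        proof (rule ccontr)
          assume "{s} \<times> ?V \<inter> Dset \<pi> c \<noteq> {}"
          then obtain p where p: "p \<in> {s} \<times> ?V" "p \<in> Dset \<pi> c" by blast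
          then obtain x' y where "p = ((Some x', \<pi> x'), (Some y, \<pi> y))" "x' * y = c"
            unfolding Dset_def by blast
          then show False using FW(4) sx p(1) by auto
        qed
        have o1: "openin (glue_top \<pi>) {s}" using sx glue_open_single by simp
        have o2: "openin (glue_top \<pi>) ?V" by (rule glue_open_nb[OF FW(1,2)])
        have m1: "s \<in> {s}" by simp
        have m2: "t \<in> ?V" using 2 FW(3) by (auto simp: glue_carrier_def)
        show ?thesis using o1 o2 m1 m2 disj by (intro exI[of _ "{s}"] exI[of _ ?V] conjI) assumption+
      qed
    next
      case (2 a)
      note sa = this
      show ?thesis
      proof (cases rule: glue_carrier_cases[OF st(2)])
        case (1 y)
        obtain F W where FW: "finite F" "open W" "a \<in> W" "\<forall>x. x * y = c \<longrightarrow> x \<notin> F \<longrightarrow> \<pi> x \<notin> W"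
          using R unfolding sep2_def by blast
        let ?U = "?C \<inter> ((- (Some ` F)) \<times> W)"
        have disj: "?U \<times> {t} \<inter> Dset \<pi> c = {}"
        proof (rule ccontr)
          assume "?U \<times> {t} \<inter> Dset \<pi> c \<noteq> {}"
          then obtain p where p: "p \<in> ?U \<times> {t}" "p \<in> Dset \<pi> c" by blast
          then obtain x y' where "p = ((Some x, \<pi> x), (Some y', \<pi> y'))" "x * y' = c"
            unfolding Dset_def by blast
          then show False using FW(4) 1 p(1) by auto
        qed
        have o1: "openin (glue_top \<pi>) {t}" using 1 glue_open_single by simp
        have o2: "openin (glue_top \<pi>) ?U" by (rule glue_open_nb[OF FW(1,2)])
        have m1: "t \<in> {t}" by simp
        have m2: "s \<in> ?U" using sa FW(3) by (auto simp: glue_carrier_def)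
        show ?thesis using o2 o1 m2 m1 disj by (intro exI[of _ ?U] exI[of _ "{t}"] conjI) assumption+
      next
        case (2 b)
        obtain F1 W1 F2 W2 where FW: "finite F1" "finite F2" "open W1" "open W2" "a \<in> W1" "b \<in> W2"
          "\<forall>x y. x * y = c \<longrightarrow> x \<notin> F1 \<longrightarrow> y \<notin> F2 \<longrightarrow> \<pi> x \<in> W1 \<longrightarrow> \<pi> y \<notin> W2"
          using R unfolding sep3_def by blast
        let ?U = "?C \<inter> ((- (Some ` F1)) \<times> W1)"
        let ?V = "?C \<inter> ((- (Some ` F2)) \<times> W2)"
        have disj: "?U \<times> ?V \<inter> Dset \<pi> c = {}"
        proof (rule ccontr)
          assume "?U \<times> ?V \<inter> Dset \<pi> c \<noteq> {}"
          then obtain p where p: "p \<in> ?U \<times> ?V" "p \<in> Dset \<pi> c" by blast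
          then obtain x y where "p = ((Some x, \<pi> x), (Some y, \<pi> y))" "x * y = c"
            unfolding Dset_def by blast
          then show False using FW(7) p(1) by auto
        qed
        have o1: "openin (glue_top \<pi>) ?U" by (rule glue_open_nb[OF FW(1,3)])
        have o2: "openin (glue_top \<pi>) ?V" by (rule glue_open_nb[OF FW(2,4)])
        have m1: "s \<in> ?U" using sa FW(5) by (auto simp: glue_carrier_def)
        have m2: "t \<in> ?V" using 2 FW(6) by (auto simp: glue_carrier_def)
        show ?thesis using o1 o2 m1 m2 disj by (intro exI[of _ ?U] exI[of _ ?V] conjI) assumption+
      qed
    qed
  qed
qed

lemma sep1_strong:
  fixes \<pi> :: "'d::semigroup_mult \<Rightarrow> 'm::t2_space"
  assumes "sep1 \<pi> c"
  shows "\<exists>W. open W \<and> b \<in> W \<and> (\<forall>y. x * y = c \<longrightarrow> \<pi> y \<in> W \<longrightarrow> \<pi> y = b)"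
proof -
  have "\<exists>F W. finite F \<and> open W \<and> b \<in> W \<and> (\<forall>y. x * y = c \<longrightarrow> y \<notin> F \<longrightarrow> \<pi> y \<notin> W)"
    using assms unfolding sep1_def by blast
  then obtain F W where FW: "finite F" "open W" "b \<in> W" "\<forall>y. x * y = c \<longrightarrow> y \<notin> F \<longrightarrow> \<pi> y \<notin> W"
    by (elim exE conjE)
  let ?W = "W - (\<pi> ` F - {b})"
  have o: "open ?W" using FW(1,2) by (intro open_Diff finite_imp_closed) auto
  have m: "b \<in> ?W" using FW(3) by simp
  have k: "\<pi> y = b" if "x * y = c" "\<pi> y \<in> ?W" for y
  proof (cases "y \<in> F")
    case True then show ?thesis using that by auto
  next
    case False then show ?thesis using that FW(4) by auto
  qed
  show ?thesis by (intro exI[of _ ?W] conjI allI impI o m k)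
qed

lemma sep2_strong:
  fixes \<pi> :: "'d::semigroup_mult \<Rightarrow> 'm::t2_space"
  assumes "sep2 \<pi> c"
  shows "\<exists>W. open W \<and> a \<in> W \<and> (\<forall>x. x * y = c \<longrightarrow> \<pi> x \<in> W \<longrightarrow> \<pi> x = a)"
proof -
  obtain F W where FW: "finite F" "open W" "a \<in> W" "\<forall>x. x * y = c \<longrightarrow> x \<notin> F \<longrightarrow> \<pi> x \<notin> W"
    using assms[unfolded sep2_def, rule_format, of a y] by (elim exE conjE)
  let ?W = "W - (\<pi> ` F - {a})"
  have o: "open ?W" using FW(1,2) by (intro open_Diff finite_imp_closed) auto
  have m: "a \<in> ?W" using FW(3) by simp
  have k: "\<pi> x = a" if "x * y = c" "\<pi> x \<in> ?W" for x
  proof (cases "x \<in> F")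
    case True then show ?thesis using that by auto
  next
    case False then show ?thesis using that FW(4) by auto
  qed
  show ?thesis by (intro exI[of _ ?W] conjI allI impI o m k)
qed

lemma sep_claim:
  fixes \<pi> :: "'d::semigroup_mult \<Rightarrow> 'm::t2_space"
  assumes s1: "sep1 \<pi> c" and s2: "sep2 \<pi> c" and s3: "sep3 \<pi> c"
  shows "claim \<pi> c"
  unfolding claim_def
proof (intro allI)
  fix a b
  obtain F1 W1 F2 W2 where FW: "finite F1" "finite F2" "open W1" "open W2" "a \<in> W1" "b \<in> W2"
    "\<forall>x y. x * y = c \<longrightarrow> x \<notin> F1 \<longrightarrow> y \<notin> F2 \<longrightarrow> \<pi> x \<in> W1 \<longrightarrow> \<pi> y \<notin> W2"
    using s3[unfolded sep3_def, rule_format, of a b] by (elim exE conjE)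
  have "\<forall>x. \<exists>W. open W \<and> b \<in> W \<and> (\<forall>y. x * y = c \<longrightarrow> \<pi> y \<in> W \<longrightarrow> \<pi> y = b)"
    by (intro allI sep1_strong[OF s1])
  from choice[OF this] obtain G1 where G1: "\<forall>x. open (G1 x) \<and> b \<in> G1 x \<and> (\<forall>y. x * y = c \<longrightarrow> \<pi> y \<in> G1 x \<longrightarrow> \<pi> y = b)"
    by (elim exE)
  have "\<forall>y. \<exists>W. open W \<and> a \<in> W \<and> (\<forall>x. x * y = c \<longrightarrow> \<pi> x \<in> W \<longrightarrow> \<pi> x = a)"
    by (intro allI sep2_strong[OF s2])
  from choice[OF this] obtain G2 where G2: "\<forall>y. open (G2 y) \<and> a \<in> G2 y \<and> (\<forall>x. x * y = c \<longrightarrow> \<pi> x \<in> G2 y \<longrightarrow> \<pi> x = a)"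
    by (elim exE)
  define V1 where "V1 = (W1 \<inter> \<Inter>(G2 ` F2)) - (\<pi> ` F1 - {a})"
  define V2 where "V2 = (W2 \<inter> \<Inter>(G1 ` F1)) - (\<pi> ` F2 - {b})"
  have "open (\<Inter>(G2 ` F2))" using FW(2) G2 by (intro open_Inter) auto
  hence o1: "open V1" unfolding V1_def using FW(1,3) by (intro open_Diff open_Int finite_imp_closed) auto
  have "open (\<Inter>(G1 ` F1))" using FW(1) G1 by (intro open_Inter) auto
  hence o2: "open V2" unfolding V2_def using FW(2,4) by (intro open_Diff open_Int finite_imp_closed) auto
  have aG2: "\<forall>y. a \<in> G2 y" using G2 by simp
  have bG1: "\<forall>x. b \<in> G1 x" using G1 by simp
  have m1: "a \<in> V1" unfolding V1_def using FW(5) aG2 by simp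
  have m2: "b \<in> V2" unfolding V2_def using FW(6) bG1 by simp
  have key: "\<pi> x = a \<and> \<pi> y = b" if xy: "x * y = c" "\<pi> x \<in> V1" "\<pi> y \<in> V2" for x y
  proof (cases "x \<in> F1")
    case True
    then have "\<pi> x = a" using xy(2) unfolding V1_def by auto
    moreover have "\<pi> y \<in> G1 x" using True xy(3) unfolding V2_def by auto
    ultimately show ?thesis using G1 xy(1) by blast
  next
    case nF1: False
    show ?thesis
    proof (cases "y \<in> F2")
      case True
      then have "\<pi> y = b" using xy(3) unfolding V2_def by auto
      moreover have "\<pi> x \<in> G2 y" using True xy(2) unfolding V1_def by auto
      ultimately show ?thesis using G2 xy(1) by blast
    next
      case False
      have "\<pi> x \<in> W1" "\<pi> y \<in> W2" using xy(2,3) unfolding V1_def V2_def by auto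
      then show ?thesis using FW(7) xy(1) nF1 False by blast
    qed
  qed
  have key_all: "\<forall>x y. x * y = c \<longrightarrow> \<pi> x \<in> V1 \<longrightarrow> \<pi> y \<in> V2 \<longrightarrow> \<pi> x = a \<and> \<pi> y = b"
    by (intro allI impI key)
  show "\<exists>W1 W2. open W1 \<and> open W2 \<and> a \<in> W1 \<and> b \<in> W2 \<and>
      (\<forall>x y. x * y = c \<longrightarrow> \<pi> x \<in> W1 \<longrightarrow> \<pi> y \<in> W2 \<longrightarrow> \<pi> x = a \<and> \<pi> y = b)"
    apply (rule exI[of _ V1], rule exI[of _ V2])
    by (intro conjI o1 o2 m1 m2 key_all)
qed

lemma claim_sep:
  fixes \<pi> :: "'d::semigroup_mult \<Rightarrow> 'm::t2_space"
  assumes cl: "claim \<pi> c" and fr: "finitely_resolvable \<pi>"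
  shows "sep1 \<pi> c \<and> sep2 \<pi> c \<and> sep3 \<pi> c"
proof (intro conjI)
  show "sep1 \<pi> c" unfolding sep1_def
  proof (intro allI)
    fix x b
    obtain W1 W2 where W: "open W1" "open W2" "\<pi> x \<in> W1" "b \<in> W2"
      "\<forall>x' y. x' * y = c \<longrightarrow> \<pi> x' \<in> W1 \<longrightarrow> \<pi> y \<in> W2 \<longrightarrow> \<pi> x' = \<pi> x \<and> \<pi> y = b"
      using cl[unfolded claim_def, rule_format, of "\<pi> x" b] by (elim exE conjE)
    let ?F = "{y. x * y = c \<and> \<pi> y = b}"
    have sub: "?F \<subseteq> snd ` {(x', y). \<pi> x' = \<pi> x \<and> \<pi> y = b \<and> x' * y = c}"
    proof
      fix y assume "y \<in> ?F"
      then have "(x, y) \<in> {(x', y). \<pi> x' = \<pi> x \<and> \<pi> y = b \<and> x' * y = c}" by simp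
      then show "y \<in> snd ` {(x', y). \<pi> x' = \<pi> x \<and> \<pi> y = b \<and> x' * y = c}" by (rule rev_image_eqI) simp
    qed
    have fin: "finite {(x', y). \<pi> x' = \<pi> x \<and> \<pi> y = b \<and> x' * y = c}"
      using fr[unfolded finitely_resolvable_def, rule_format, of "\<pi> x" b c] .
    have fF: "finite ?F" using finite_subset[OF sub finite_imageI[OF fin]] .
    have hW: "\<forall>y. x * y = c \<longrightarrow> y \<notin> ?F \<longrightarrow> \<pi> y \<notin> W2"
    proof (intro allI impI notI)
      fix y assume h: "x * y = c" "y \<notin> ?F" "\<pi> y \<in> W2"
      have "\<pi> y = b" using W(5)[rule_format, OF h(1) W(3) h(3)] by simp
      then show False using h(1,2) by simp
    qed
    show "\<exists>F W. finite F \<and> open W \<and> b \<in> W \<and> (\<forall>y. x * y = c \<longrightarrow> y \<notin> F \<longrightarrow> \<pi> y \<notin> W)"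
      apply (rule exI[of _ ?F], rule exI[of _ W2]) by (intro conjI fF W(2) W(4) hW)
  qed
  show "sep2 \<pi> c" unfolding sep2_def
  proof (intro allI)
    fix a y
    obtain W1 W2 where W: "open W1" "open W2" "a \<in> W1" "\<pi> y \<in> W2"
      "\<forall>x y'. x * y' = c \<longrightarrow> \<pi> x \<in> W1 \<longrightarrow> \<pi> y' \<in> W2 \<longrightarrow> \<pi> x = a \<and> \<pi> y' = \<pi> y"
      using cl[unfolded claim_def, rule_format, of a "\<pi> y"] by (elim exE conjE)
    let ?F = "{x. x * y = c \<and> \<pi> x = a}"
    have sub: "?F \<subseteq> fst ` {(x, y'). \<pi> x = a \<and> \<pi> y' = \<pi> y \<and> x * y' = c}"
    proof
      fix x assume "x \<in> ?F"
      then have "(x, y) \<in> {(x, y'). \<pi> x = a \<and> \<pi> y' = \<pi> y \<and> x * y' = c}" by simp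
      then show "x \<in> fst ` {(x, y'). \<pi> x = a \<and> \<pi> y' = \<pi> y \<and> x * y' = c}" by (rule rev_image_eqI) simp
    qed
    have fin: "finite {(x, y'). \<pi> x = a \<and> \<pi> y' = \<pi> y \<and> x * y' = c}"
      using fr[unfolded finitely_resolvable_def, rule_format, of a "\<pi> y" c] .
    have fF: "finite ?F" using finite_subset[OF sub finite_imageI[OF fin]] .
    have hW: "\<forall>x. x * y = c \<longrightarrow> x \<notin> ?F \<longrightarrow> \<pi> x \<notin> W1"
    proof (intro allI impI notI)
      fix x assume h: "x * y = c" "x \<notin> ?F" "\<pi> x \<in> W1"
      have "\<pi> x = a" using W(5)[rule_format, OF h(1) h(3) W(4)] by simp
      then show False using h(1,2) by simp
    qed
    show "\<exists>F W. finite F \<and> open W \<and> a \<in> W \<and> (\<forall>x. x * y = c \<longrightarrow> x \<notin> F \<longrightarrow> \<pi> x \<notin> W)"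
      apply (rule exI[of _ ?F], rule exI[of _ W1]) by (intro conjI fF W(1) W(3) hW)
  qed
  show "sep3 \<pi> c" unfolding sep3_def
  proof (intro allI)
    fix a b
    obtain W1 W2 where W: "open W1" "open W2" "a \<in> W1" "b \<in> W2"
      "\<forall>x y. x * y = c \<longrightarrow> \<pi> x \<in> W1 \<longrightarrow> \<pi> y \<in> W2 \<longrightarrow> \<pi> x = a \<and> \<pi> y = b"
      using cl[unfolded claim_def, rule_format, of a b] by (elim exE conjE)
    let ?G = "{(x, y). \<pi> x = a \<and> \<pi> y = b \<and> x * y = c}"
    have fG: "finite ?G" using fr[unfolded finitely_resolvable_def, rule_format, of a b c] .
    have hh: "\<forall>x y. x * y = c \<longrightarrow> x \<notin> fst ` ?G \<longrightarrow> y \<notin> snd ` ?G \<longrightarrow> \<pi> x \<in> W1 \<longrightarrow> \<pi> y \<notin> W2"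
    proof (intro allI impI notI)
      fix x y assume h: "x * y = c" "x \<notin> fst ` ?G" "y \<notin> snd ` ?G" "\<pi> x \<in> W1" "\<pi> y \<in> W2"
      have "(x, y) \<in> ?G" using W(5)[rule_format, OF h(1) h(4) h(5)] h(1) by simp
      then have "x \<in> fst ` ?G" by (rule rev_image_eqI) simp
      then show False using h(2) by simp
    qed
    show "\<exists>F1 W1 F2 W2. finite F1 \<and> finite F2 \<and> open W1 \<and> open W2 \<and> a \<in> W1 \<and> b \<in> W2 \<and>
      (\<forall>x y. x * y = c \<longrightarrow> x \<notin> F1 \<longrightarrow> y \<notin> F2 \<longrightarrow> \<pi> x \<in> W1 \<longrightarrow> \<pi> y \<notin> W2)"
      apply (rule exI[of _ "fst ` ?G"], rule exI[of _ W1], rule exI[of _ "snd ` ?G"], rule exI[of _ W2])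
      using finite_imageI[OF fG, of fst] finite_imageI[OF fG, of snd] W(1-4) hh by (intro conjI) assumption+
  qed
qed

lemma mult_box:
  fixes a b :: "'m::{topological_space, semigroup_mult}"
  assumes topsg: "continuous_map (prod_topology euclidean euclidean) euclidean (\<lambda>(a::'m, b). a * b)"
    and W: "open W" "a * b \<in> W"
  shows "\<exists>W1 W2. open W1 \<and> open W2 \<and> a \<in> W1 \<and> b \<in> W2 \<and> (\<forall>u\<in>W1. \<forall>v\<in>W2. u * v \<in> W)"
proof -
  let ?O = "{z \<in> topspace (prod_topology (euclidean::'m topology) euclidean). (\<lambda>(a::'m, b). a * b) z \<in> W}"
  have oW: "openin euclidean W" using W(1) by (simp only: open_openin)
  have oO: "openin (prod_topology euclidean euclidean) ?O"
    by (rule openin_continuous_map_preimage[OF topsg oW])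
  have abO: "(a, b) \<in> ?O" using W(2) by simp
  obtain U V where UV: "openin euclidean U" "openin euclidean V" "a \<in> U" "b \<in> V" "U \<times> V \<subseteq> ?O"
    using oO[unfolded openin_prod_topology_alt, rule_format, OF abO] by (elim exE conjE)
  have "\<forall>u\<in>U. \<forall>v\<in>V. u * v \<in> W"
  proof (intro ballI)
    fix u v assume "u \<in> U" "v \<in> V"
    then have "(u, v) \<in> ?O" using UV(5) by blast
    then show "u * v \<in> W" by simp
  qed
  moreover have "open U" "open V" using UV(1,2) by (simp_all only: open_openin)
  ultimately show ?thesis using UV(3,4)
    by (intro exI[of _ U] exI[of _ V] conjI) assumption+
qed

lemma claim_iff_C3:
  fixes \<pi> :: "'d::semigroup_mult \<Rightarrow> 'm::t2_space"
  shows "claim \<pi> c \<longleftrightarrow>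
    (closedin (prod_topology (euclidean::'m topology) (euclidean::'m topology)) {(\<pi> x, \<pi> y) | x y. x * y = c}
     \<and> subtopology (prod_topology euclidean euclidean) {(\<pi> x, \<pi> y) | x y. x * y = c}
        = discrete_topology {(\<pi> x, \<pi> y) | x y. x * y = c})"
proof -
  define P where "P = {(\<pi> x, \<pi> y) | x y. x * y = c}"
  have Pmem: "(u, v) \<in> P \<longleftrightarrow> (\<exists>x y. u = \<pi> x \<and> v = \<pi> y \<and> x * y = c)" for u v
    unfolding P_def by blast
  have "claim \<pi> c \<longleftrightarrow> closed P \<and> (\<forall>p\<in>P. \<exists>U. open U \<and> U \<inter> P = {p})"
  proof
    assume cl: "claim \<pi> c"
    have "open (- P)" unfolding open_prod_def
    proof (intro ballI)
      fix z assume "z \<in> - P"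
      obtain a b where z: "z = (a, b)" by fastforce
      obtain W1 W2 where W: "open W1" "open W2" "a \<in> W1" "b \<in> W2"
        "\<forall>x y. x * y = c \<longrightarrow> \<pi> x \<in> W1 \<longrightarrow> \<pi> y \<in> W2 \<longrightarrow> \<pi> x = a \<and> \<pi> y = b"
        using cl[unfolded claim_def, rule_format, of a b] by (elim exE conjE)
      have "W1 \<times> W2 \<subseteq> - P"
      proof
        fix q assume q: "q \<in> W1 \<times> W2"
        show "q \<in> - P"
        proof
          assume "q \<in> P"
          then obtain x y where xy: "q = (\<pi> x, \<pi> y)" "x * y = c" unfolding P_def by blast
          then have "\<pi> x = a \<and> \<pi> y = b" using W(5)[rule_format, OF xy(2)] q by simp
          then have "z \<in> P" using xy z Pmem by blast
          then show False using \<open>z \<in> - P\<close> by simp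
        qed
      qed
      then show "\<exists>A B. open A \<and> open B \<and> z \<in> A \<times> B \<and> A \<times> B \<subseteq> - P"
        using W(1-4) z by (intro exI[of _ W1] exI[of _ W2]) simp
    qed
    then have "closed P" by (simp add: closed_def)
    moreover have "\<forall>p\<in>P. \<exists>U. open U \<and> U \<inter> P = {p}"
    proof
      fix p assume "p \<in> P"
      then obtain x0 y0 where p: "p = (\<pi> x0, \<pi> y0)" "x0 * y0 = c" unfolding P_def by blast
      obtain W1 W2 where W: "open W1" "open W2" "\<pi> x0 \<in> W1" "\<pi> y0 \<in> W2"
        "\<forall>x y. x * y = c \<longrightarrow> \<pi> x \<in> W1 \<longrightarrow> \<pi> y \<in> W2 \<longrightarrow> \<pi> x = \<pi> x0 \<and> \<pi> y = \<pi> y0"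
        using cl[unfolded claim_def, rule_format, of "\<pi> x0" "\<pi> y0"] by (elim exE conjE)
      have "W1 \<times> W2 \<inter> P \<subseteq> {p}"
      proof
        fix q assume q: "q \<in> W1 \<times> W2 \<inter> P"
        then obtain x y where xy: "q = (\<pi> x, \<pi> y)" "x * y = c" unfolding P_def by blast
        then have "\<pi> x = \<pi> x0 \<and> \<pi> y = \<pi> y0" using W(5)[rule_format, OF xy(2)] q by simp
        then show "q \<in> {p}" using xy p by simp
      qed
      moreover have "p \<in> W1 \<times> W2 \<inter> P" using W(3,4) p \<open>p \<in> P\<close> by simp
      ultimately have "W1 \<times> W2 \<inter> P = {p}" by blast
      then show "\<exists>U. open U \<and> U \<inter> P = {p}" using open_Times[OF W(1,2)] by blast
    qed
    ultimately show "closed P \<and> (\<forall>p\<in>P. \<exists>U. open U \<and> U \<inter> P = {p})" by simp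
  next
    assume R: "closed P \<and> (\<forall>p\<in>P. \<exists>U. open U \<and> U \<inter> P = {p})"
    show "claim \<pi> c" unfolding claim_def
    proof (intro allI)
      fix a b
      show "\<exists>W1 W2. open W1 \<and> open W2 \<and> a \<in> W1 \<and> b \<in> W2 \<and>
          (\<forall>x y. x * y = c \<longrightarrow> \<pi> x \<in> W1 \<longrightarrow> \<pi> y \<in> W2 \<longrightarrow> \<pi> x = a \<and> \<pi> y = b)"
      proof (cases "(a, b) \<in> P")
        case True
        then obtain U where U: "open U" "U \<inter> P = {(a, b)}" using R by blast
        then have abU: "(a, b) \<in> U" by blast
        obtain A B where AB: "open A" "open B" "(a, b) \<in> A \<times> B" "A \<times> B \<subseteq> U"
          using U(1)[unfolded open_prod_def, rule_format, OF abU] by (elim exE conjE)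
        have k: "\<forall>x y. x * y = c \<longrightarrow> \<pi> x \<in> A \<longrightarrow> \<pi> y \<in> B \<longrightarrow> \<pi> x = a \<and> \<pi> y = b"
        proof (intro allI impI)
          fix x y assume h: "x * y = c" "\<pi> x \<in> A" "\<pi> y \<in> B"
          then have "(\<pi> x, \<pi> y) \<in> U" using AB(4) by blast
          moreover have "(\<pi> x, \<pi> y) \<in> P" using h(1) Pmem by blast
          ultimately have "(\<pi> x, \<pi> y) \<in> U \<inter> P" by simp
          then show "\<pi> x = a \<and> \<pi> y = b" using U(2) by simp
        qed
        show ?thesis using AB(1-3) k by (intro exI[of _ A] exI[of _ B]) simp
      next
        case False
        have oP: "open (- P)" using open_Compl[of P] R by blast
        have abP: "(a, b) \<in> - P" using False by simp
        obtain A B where AB: "open A" "open B" "(a, b) \<in> A \<times> B" "A \<times> B \<subseteq> - P"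
          using oP[unfolded open_prod_def, rule_format, OF abP] by (elim exE conjE)
        have k: "\<forall>x y. x * y = c \<longrightarrow> \<pi> x \<in> A \<longrightarrow> \<pi> y \<in> B \<longrightarrow> \<pi> x = a \<and> \<pi> y = b"
        proof (intro allI impI)
          fix x y assume h: "x * y = c" "\<pi> x \<in> A" "\<pi> y \<in> B"
          then have "(\<pi> x, \<pi> y) \<in> - P" using AB(4) by blast
          moreover have "(\<pi> x, \<pi> y) \<in> P" using h(1) Pmem by blast
          ultimately show "\<pi> x = a \<and> \<pi> y = b" by simp
        qed
        show ?thesis using AB(1-3) k by (intro exI[of _ A] exI[of _ B]) simp
      qed
    qed
  qed
  moreover have "closedin (prod_topology (euclidean::'m topology) (euclidean::'m topology)) P \<longleftrightarrow> closed P"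
    by (simp only: prod_topology_euclidean closed_closedin)
  moreover have "subtopology (prod_topology (euclidean::'m topology) (euclidean::'m topology)) P = discrete_topology P
     \<longleftrightarrow> (\<forall>p\<in>P. \<exists>U. open U \<and> U \<inter> P = {p})"
    by (simp only: prod_topology_euclidean discrete_iff)
  ultimately show ?thesis unfolding P_def by blast
qed

lemma C4_claim:
  fixes \<pi> :: "'d::semigroup_mult \<Rightarrow> 'm::{t2_space, semigroup_mult}"
  assumes hom: "\<And>x y. \<pi> (x * y) = \<pi> x * \<pi> y"
    and topsg: "continuous_map (prod_topology euclidean euclidean) euclidean (\<lambda>(a::'m, b). a * b)"
    and disc: "subtopology (euclidean::'m topology) (range \<pi>) = discrete_topology (range \<pi>)"
    and ideal: "two_sided_ideal (- range \<pi>)"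
  shows "claim \<pi> c"
  unfolding claim_def
proof (intro allI)
  fix a b
  show "\<exists>W1 W2. open W1 \<and> open W2 \<and> a \<in> W1 \<and> b \<in> W2 \<and>
          (\<forall>x y. x * y = c \<longrightarrow> \<pi> x \<in> W1 \<longrightarrow> \<pi> y \<in> W2 \<longrightarrow> \<pi> x = a \<and> \<pi> y = b)"
  proof (cases "a * b = \<pi> c")
    case True
    have ar: "a \<in> range \<pi>"
    proof (rule ccontr)
      assume "a \<notin> range \<pi>"
      then have "a * b \<in> - range \<pi>" using ideal unfolding two_sided_ideal_def by simp
      then show False using True by simp
    qed
    have br: "b \<in> range \<pi>"
    proof (rule ccontr)
      assume "b \<notin> range \<pi>"
      then have "a * b \<in> - range \<pi>" using ideal unfolding two_sided_ideal_def by simp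
      then show False using True by simp
    qed
    have D: "\<forall>p\<in>range \<pi>. \<exists>U. open U \<and> U \<inter> range \<pi> = {p}" using disc discrete_iff by blast
    obtain U1 where U1: "open U1" "U1 \<inter> range \<pi> = {a}" using D ar by blast
    obtain U2 where U2: "open U2" "U2 \<inter> range \<pi> = {b}" using D br by blast
    have k: "\<forall>x y. x * y = c \<longrightarrow> \<pi> x \<in> U1 \<longrightarrow> \<pi> y \<in> U2 \<longrightarrow> \<pi> x = a \<and> \<pi> y = b"
    proof (intro allI impI)
      fix x y assume h: "x * y = c" "\<pi> x \<in> U1" "\<pi> y \<in> U2"
      have "\<pi> x \<in> U1 \<inter> range \<pi>" "\<pi> y \<in> U2 \<inter> range \<pi>" using h by auto
      then show "\<pi> x = a \<and> \<pi> y = b" using U1(2) U2(2) by simp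
    qed
    have "a \<in> U1" "b \<in> U2" using U1(2) U2(2) by auto
    then show ?thesis using U1(1) U2(1) k by (intro exI[of _ U1] exI[of _ U2]) simp
  next
    case False
    have o: "open (- {\<pi> c})" by (intro open_Compl closed_singleton)
    have ab: "a * b \<in> - {\<pi> c}" using False by simp
    obtain W1 W2 where W: "open W1" "open W2" "a \<in> W1" "b \<in> W2" "\<forall>u\<in>W1. \<forall>v\<in>W2. u * v \<in> - {\<pi> c}"
      using mult_box[OF topsg o ab] by (elim exE conjE)
    have k: "\<forall>x y. x * y = c \<longrightarrow> \<pi> x \<in> W1 \<longrightarrow> \<pi> y \<in> W2 \<longrightarrow> \<pi> x = a \<and> \<pi> y = b"
    proof (intro allI impI)
      fix x y assume h: "x * y = c" "\<pi> x \<in> W1" "\<pi> y \<in> W2"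
      have "\<pi> x * \<pi> y \<in> - {\<pi> c}" using W(5) h(2,3) by blast
      moreover have "\<pi> x * \<pi> y = \<pi> c" using hom h(1) by metis
      ultimately show "\<pi> x = a \<and> \<pi> y = b" by simp
    qed
    show ?thesis using W(1-4) k by (intro exI[of _ W1] exI[of _ W2]) simp
  qed
qed

lemma glue_mult_SS: "glue_mult (Some x, a) (Some y, b) = (Some (x * y), a * b)"
  by (simp add: glue_mult_def)
lemma glue_mult_N1: "glue_mult (None, a) t = (None, a * snd t)"
  by (simp add: glue_mult_def)
lemma glue_mult_N2: "glue_mult s (None, b) = (None, snd s * b)"
  by (simp add: glue_mult_def split: option.split)

lemma glue_mult_closed:
  assumes hom: "\<And>x y. \<pi> (x * y) = \<pi> x * \<pi> y"
    and s: "s \<in> glue_carrier \<pi>" and t: "t \<in> glue_carrier \<pi>"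
  shows "glue_mult s t \<in> glue_carrier \<pi>"
proof (cases rule: glue_carrier_cases[OF s])
  case (1 x)
  show ?thesis
  proof (cases rule: glue_carrier_cases[OF t])
    case (1 y)
    then show ?thesis using \<open>s = (Some x, \<pi> x)\<close> hom[of x y] by (simp add: glue_mult_SS glue_carrier_def)
  next
    case (2 b)
    then show ?thesis by (simp add: glue_mult_N2 glue_carrier_def)
  qed
next
  case (2 a)
  then show ?thesis by (simp add: glue_mult_N1 glue_carrier_def)
qed

lemma glue_closed_single: "closedin (glue_top \<pi>) {(Some c, \<pi> c)}"
proof -
  have "openin (prod_topology alpha_top euclidean) ((- {Some c}) \<times> UNIV)"
    by (simp add: openin_prod_Times_iff alpha_open)
  moreover have "glue_carrier \<pi> - {(Some c, \<pi> c)} = ((- {Some c}) \<times> UNIV) \<inter> glue_carrier \<pi>"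
    by (auto simp: glue_carrier_def)
  ultimately have "openin (glue_top \<pi>) (glue_carrier \<pi> - {(Some c, \<pi> c)})"
    unfolding glue_top_def openin_subtopology by blast
  moreover have "{(Some c, \<pi> c)} \<subseteq> glue_carrier \<pi>" by (simp add: glue_carrier_def)
  ultimately show ?thesis unfolding closedin_def glue_topspace by blast
qed

lemma C1_to_C2:
  assumes hom: "\<And>x y. \<pi> (x * y) = \<pi> x * \<pi> y"
    and cont: "continuous_map (prod_topology (glue_top \<pi>) (glue_top \<pi>)) (glue_top \<pi>) (\<lambda>(s, t). glue_mult s t)"
  shows "closedin (prod_topology (glue_top \<pi>) (glue_top \<pi>)) (Dset \<pi> c)"
proof -
  let ?X = "prod_topology (glue_top \<pi>) (glue_top \<pi>)"
  have eq: "Dset \<pi> c = {z \<in> topspace ?X. (\<lambda>(s, t). glue_mult s t) z \<in> {(Some c, \<pi> c)}}"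
  proof
    show "Dset \<pi> c \<subseteq> {z \<in> topspace ?X. (\<lambda>(s, t). glue_mult s t) z \<in> {(Some c, \<pi> c)}}"
    proof
      fix z assume "z \<in> Dset \<pi> c"
      then obtain x y where z: "z = ((Some x, \<pi> x), (Some y, \<pi> y))" "x * y = c"
        unfolding Dset_def by blast
      then show "z \<in> {z \<in> topspace ?X. (\<lambda>(s, t). glue_mult s t) z \<in> {(Some c, \<pi> c)}}"
        using hom[of x y] by (simp add: glue_mult_SS glue_topspace glue_carrier_def)
    qed
  next
    show "{z \<in> topspace ?X. (\<lambda>(s, t). glue_mult s t) z \<in> {(Some c, \<pi> c)}} \<subseteq> Dset \<pi> c"
    proof
      fix z assume zin: "z \<in> {z \<in> topspace ?X. (\<lambda>(s, t). glue_mult s t) z \<in> {(Some c, \<pi> c)}}"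
      obtain s t where z: "z = (s, t)" using surj_pair[of z] by blast
      have st: "s \<in> glue_carrier \<pi>" "t \<in> glue_carrier \<pi>" using zin z by (auto simp: glue_topspace)
      have m: "glue_mult s t = (Some c, \<pi> c)" using zin z by simp
      show "z \<in> Dset \<pi> c"
      proof (cases rule: glue_carrier_cases[OF st(1)])
        case (1 x)
        note sx = this
        show ?thesis
        proof (cases rule: glue_carrier_cases[OF st(2)])
          case (1 y)
          then have "x * y = c" using m sx by (simp add: glue_mult_SS)
          then show ?thesis using z sx 1 unfolding Dset_def by blast
        next
          case (2 b)
          then show ?thesis using m by (simp add: glue_mult_N2)
        qed
      next
        case (2 a)
        then show ?thesis using m by (simp add: glue_mult_N1)
      qed
    qed
  qed
  show ?thesis unfolding eq
    by (rule closedin_continuous_map_preimage[OF cont glue_closed_single])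
qed

lemma C2_to_C1:
  fixes \<pi> :: "'d::semigroup_mult \<Rightarrow> 'm::{t2_space, semigroup_mult}"
  assumes hom: "\<And>x y. \<pi> (x * y) = \<pi> x * \<pi> y"
    and topsg: "continuous_map (prod_topology euclidean euclidean) euclidean (\<lambda>(a::'m, b). a * b)"
    and cl: "\<forall>c. closedin (prod_topology (glue_top \<pi>) (glue_top \<pi>)) (Dset \<pi> c)"
  shows "continuous_map (prod_topology (glue_top \<pi>) (glue_top \<pi>)) (glue_top \<pi>) (\<lambda>(s, t). glue_mult s t)"
  unfolding continuous_map_eq_topcontinuous_at
proof (intro ballI)
  let ?C = "glue_carrier \<pi>"
  let ?X = "prod_topology (glue_top \<pi>) (glue_top \<pi>)"
  let ?f = "\<lambda>(s, t). glue_mult s t"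
  fix z assume zX: "z \<in> topspace ?X"
  obtain s t where z: "z = (s, t)" using surj_pair[of z] by blast
  have st: "s \<in> ?C" "t \<in> ?C" using zX z by (auto simp: glue_topspace)
  have Pi: "?f \<in> topspace ?X \<rightarrow> topspace (glue_top \<pi>)"
  proof
    fix w assume "w \<in> topspace ?X"
    moreover obtain s' t' where "w = (s', t')" using surj_pair[of w] by blast
    ultimately show "?f w \<in> topspace (glue_top \<pi>)"
      using glue_mult_closed[OF hom] by (auto simp: glue_topspace)
  qed
  have nb: "\<exists>U. openin ?X U \<and> z \<in> U \<and> (\<forall>y\<in>U. ?f y \<in> V)"
    if V: "openin (glue_top \<pi>) V" "?f z \<in> V" for V
  proof (cases "\<exists>x y. s = (Some x, \<pi> x) \<and> t = (Some y, \<pi> y)")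
    case True
    then obtain x y where xy: "s = (Some x, \<pi> x)" "t = (Some y, \<pi> y)" by blast
    have "openin ?X ({s} \<times> {t})"
      using openin_prod_Times_iff[of "glue_top \<pi>" "glue_top \<pi>" "{s}" "{t}"] xy
        glue_open_single[of \<pi> x] glue_open_single[of \<pi> y] by blast
    moreover have "z \<in> {s} \<times> {t}" using z by simp
    moreover have "\<forall>y\<in>{s} \<times> {t}. ?f y \<in> V" using V(2) z by simp
    ultimately show ?thesis by blast
  next
    case False
    have fz: "?f z = (None, snd s * snd t)"
    proof (cases rule: glue_carrier_cases[OF st(1)])
      case (1 x)
      note sx = this
      show ?thesis
      proof (cases rule: glue_carrier_cases[OF st(2)])
        case (1 y) then show ?thesis using sx False by blast
      next
        case (2 b) then show ?thesis using z sx by (simp add: glue_mult_N2)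
      qed
    next
      case (2 a) then show ?thesis using z by (simp add: glue_mult_N1)
    qed
    have "\<exists>F W. finite F \<and> open W \<and> snd s * snd t \<in> W \<and> ?C \<inter> ((- (Some ` F)) \<times> W) \<subseteq> V"
      using glue_nb_elim[OF V(1)] V(2) fz by simp
    then obtain F W where FW: "finite F" "open W" "snd s * snd t \<in> W" "?C \<inter> ((- (Some ` F)) \<times> W) \<subseteq> V"
      by (elim exE conjE)
    obtain W1 W2 where W: "open W1" "open W2" "snd s \<in> W1" "snd t \<in> W2" "\<forall>u\<in>W1. \<forall>v\<in>W2. u * v \<in> W"
      using mult_box[OF topsg FW(2,3)] by (elim exE conjE)
    have notD: "(s, t) \<notin> Dset \<pi> c" for c
      using False unfolding Dset_def by blast
    have sep: "\<exists>A B. openin (glue_top \<pi>) A \<and> openin (glue_top \<pi>) B \<and> s \<in> A \<and> t \<in> B \<and> (A \<times> B) \<inter> Dset \<pi> c = {}" for c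
    proof -
      have "\<forall>x\<in>topspace (glue_top \<pi>). \<forall>y\<in>topspace (glue_top \<pi>). (x,y) \<notin> Dset \<pi> c \<longrightarrow>
       (\<exists>U V. openin (glue_top \<pi>) U \<and> openin (glue_top \<pi>) V \<and> x \<in> U \<and> y \<in> V \<and> (U \<times> V) \<inter> Dset \<pi> c = {})"
        using cl closedin_prod_sep[OF Dset_sub[of \<pi> c]] by blast
      then show ?thesis using st notD[of c] unfolding glue_topspace by blast
    qed
    have "\<forall>c. \<exists>A. \<exists>B. openin (glue_top \<pi>) A \<and> openin (glue_top \<pi>) B \<and> s \<in> A \<and> t \<in> B \<and> (A \<times> B) \<inter> Dset \<pi> c = {}"
      using sep by blast
    from choice[OF this] obtain fA where fA: "\<forall>c. \<exists>B. openin (glue_top \<pi>) (fA c) \<and> openin (glue_top \<pi>) B \<and> s \<in> fA c \<and> t \<in> B \<and> (fA c \<times> B) \<inter> Dset \<pi> c = {}"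
      by (elim exE)
    from choice[OF this] obtain fB where fB: "\<forall>c. openin (glue_top \<pi>) (fA c) \<and> openin (glue_top \<pi>) (fB c) \<and> s \<in> fA c \<and> t \<in> fB c \<and> (fA c \<times> fB c) \<inter> Dset \<pi> c = {}"
      by (elim exE)
    define A0 where "A0 = ?C \<inter> ((- (Some ` {})) \<times> W1)"
    define B0 where "B0 = ?C \<inter> ((- (Some ` {})) \<times> W2)"
    define UA where "UA = \<Inter> (insert A0 (fA ` F))"
    define UB where "UB = \<Inter> (insert B0 (fB ` F))"
    have oA0: "openin (glue_top \<pi>) A0" unfolding A0_def using W(1) by (intro glue_open_nb) auto
    have oB0: "openin (glue_top \<pi>) B0" unfolding B0_def using W(2) by (intro glue_open_nb) auto
    have oUA: "openin (glue_top \<pi>) UA" unfolding UA_def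
      using FW(1) oA0 fB by (intro openin_Inter) auto
    have oUB: "openin (glue_top \<pi>) UB" unfolding UB_def
      using FW(1) oB0 fB by (intro openin_Inter) auto
    have sUA: "s \<in> UA" unfolding UA_def A0_def using st(1) W(3) fB by (auto simp: mem_Times_iff)
    have tUB: "t \<in> UB" unfolding UB_def B0_def using st(2) W(4) fB by (auto simp: mem_Times_iff)
    have oU: "openin ?X (UA \<times> UB)" using oUA oUB by (simp add: openin_prod_Times_iff)
    have zU: "z \<in> UA \<times> UB" using z sUA tUB by simp
    have img: "\<forall>y\<in>UA \<times> UB. ?f y \<in> V"
    proof
      fix w assume w: "w \<in> UA \<times> UB"
      obtain s' t' where w': "w = (s', t')" using surj_pair[of w] by blast
      have s'A: "s' \<in> UA" and t'B: "t' \<in> UB" using w w' by auto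
      have s'0: "s' \<in> A0" using s'A unfolding UA_def by blast
      have t'0: "t' \<in> B0" using t'B unfolding UB_def by blast
      have s'C: "s' \<in> ?C" and s'W: "snd s' \<in> W1" using s'0 unfolding A0_def by (auto simp: mem_Times_iff)
      have t'C: "t' \<in> ?C" and t'W: "snd t' \<in> W2" using t'0 unfolding B0_def by (auto simp: mem_Times_iff)
      have inC: "glue_mult s' t' \<in> ?C" by (rule glue_mult_closed[OF hom s'C t'C])
      have sndW: "snd (glue_mult s' t') \<in> W" using W(5) s'W t'W by (simp add: glue_mult_def)
      have fstF: "fst (glue_mult s' t') \<notin> Some ` F"
      proof (cases rule: glue_carrier_cases[OF s'C])
        case (1 x)
        note sx = this
        show ?thesis
        proof (cases rule: glue_carrier_cases[OF t'C])
          case (1 y)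
          show ?thesis
          proof
            assume "fst (glue_mult s' t') \<in> Some ` F"
            then have xyF: "x * y \<in> F" using sx 1 by (auto simp: glue_mult_SS)
            then have "s' \<in> fA (x * y)" "t' \<in> fB (x * y)"
              using s'A t'B unfolding UA_def UB_def by auto
            moreover have "(s', t') \<in> Dset \<pi> (x * y)" using sx 1 unfolding Dset_def by blast
            ultimately have "(s', t') \<in> (fA (x * y) \<times> fB (x * y)) \<inter> Dset \<pi> (x * y)" by simp
            then show False using fB by blast
          qed
        next
          case (2 b) then show ?thesis by (simp add: glue_mult_N2)
        qed
      next
        case (2 a) then show ?thesis by (simp add: glue_mult_N1)
      qed
      have "glue_mult s' t' \<in> ?C \<inter> ((- (Some ` F)) \<times> W)"
        using inC sndW fstF by (cases "glue_mult s' t'") auto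
      then show "?f w \<in> V" using FW(4) w' by auto
    qed
    show ?thesis using oU zU img by blast
  qed
  show "topcontinuous_at ?X (glue_top \<pi>) ?f z"
    unfolding topcontinuous_at_def using zX Pi nb by blast
qed

theorem theorem3p2:
  fixes \<pi> :: "'d::semigroup_mult \<Rightarrow> 'm::{t2_space, semigroup_mult}"
  assumes hom: "\<And>x y. \<pi> (x * y) = \<pi> x * \<pi> y"
    and topsg: "continuous_map (prod_topology euclidean euclidean) euclidean (\<lambda>(a::'m, b). a * b)"
  defines "C1 \<equiv> continuous_map (prod_topology (glue_top \<pi>) (glue_top \<pi>)) (glue_top \<pi>)
                   (\<lambda>(s, t). glue_mult s t)"
    and "C2 \<equiv> (\<forall>c. closedin (prod_topology (glue_top \<pi>) (glue_top \<pi>))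
                   {((Some x, \<pi> x), (Some y, \<pi> y)) | x y. x * y = c})"
    and "C3 \<equiv> (\<forall>c. closedin (prod_topology (euclidean::'m topology) (euclidean::'m topology))
                       {(\<pi> x, \<pi> y) | x y. x * y = c}
                  \<and> subtopology (prod_topology euclidean euclidean) {(\<pi> x, \<pi> y) | x y. x * y = c}
                      = discrete_topology {(\<pi> x, \<pi> y) | x y. x * y = c})"
    and "C4 \<equiv> (subtopology (euclidean::'m topology) (range \<pi>) = discrete_topology (range \<pi>)
               \<and> two_sided_ideal (- range \<pi>))"
  shows "(C1 \<longleftrightarrow> C2) \<and> (finitely_resolvable \<pi> \<longrightarrow> (C1 \<longleftrightarrow> C3) \<and> (C4 \<longrightarrow> C1))"
proof -
  have C2eq: "C2 \<longleftrightarrow> (\<forall>c. closedin (prod_topology (glue_top \<pi>) (glue_top \<pi>)) (Dset \<pi> c))"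
    unfolding C2_def Dset_def by (rule refl)
  have C3eq: "C3 \<longleftrightarrow> (\<forall>c. claim \<pi> c)"
    unfolding C3_def by (simp only: claim_iff_C3)
  have c12: "C1 \<longleftrightarrow> C2"
  proof
    assume C1
    then show C2 unfolding C2eq C1_def using C1_to_C2[OF hom] by blast
  next
    assume C2
    then show C1 unfolding C2eq C1_def using C2_to_C1[OF hom topsg] by blast
  qed
  have c2cl: "C2 \<Longrightarrow> claim \<pi> c" for c
    unfolding C2eq using closed_iff_sep sep_claim by blast
  have clc2: "finitely_resolvable \<pi> \<Longrightarrow> (\<forall>c. claim \<pi> c) \<Longrightarrow> C2"
    unfolding C2eq using closed_iff_sep claim_sep by blast
  have c4: "C4 \<Longrightarrow> claim \<pi> c" for c
    unfolding C4_def using C4_claim[OF hom topsg] by blast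
  show ?thesis
  proof (intro conjI impI)
    show "C1 \<longleftrightarrow> C2" by (rule c12)
  next
    assume fr: "finitely_resolvable \<pi>"
    show "C1 \<longleftrightarrow> C3" unfolding c12 C3eq using c2cl clc2[OF fr] by blast
  next
    assume fr: "finitely_resolvable \<pi>" and "C4"
    then show C1 unfolding c12 using c4 clc2[OF fr] by blast
  qed
qed

end
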